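(* Let $X$ be a compact metric space and $T:X\to X$ a surjective local homeomorphism such that $Sp_l(X,T)$ is a finite set of isolated points of $X$. Then \[{\rm dad}(\mathcal{G}_{(X,T)})\le{\rm dim}_{\rm am}(X,T).\]
   Context: $Sp_l(X,T)=\{x:|T^{-1}(\{x\})|\ge2\}$. $\mathcal{G}_{(X,T)}=\{(x,m-n,y)\in X\times\mathbb{Z}\times X: T^m(x)=T^n(y), m,n\in\mathbb{N}\}$, the Deaconu–Renault groupoid with unit space $X$, $r(x,k,y)=x$, $s(x,k,y)=y$, $(x,k,y)(y,l,z)=(x,k+l,z)$, standard étale topology. Dynamic asymptotic dimension ${\rm dad}(\mathcal{G})$ of an étale groupoid: least $d$ such that for every open relatively compact $K\subseteq\mathcal{G}$ there are open $U_0,\dots,U_d\subseteq\mathcal{G}^{(0)}$ covering $s(K)\cup r(K)$ such that each set $\{g\in K: s(g),r(g)\in U_i\}$ is contained in a relatively compact subgroupoid of $\mathcal{G}$. Amenability dimension: $P_d(\mathbb{Z})$ = probability measures on $\mathbb{Z}$ supported on at most $d+1$ points, $\rho(\mu,\nu)=\sum_m|\mu(m)-\nu(m)|$, $\alpha_n(\mu)(m)=\mu(m-n)$; $T^n(\{x\})$ is the image under $T^n$ for $n\ge0$ and the preimage under $T^{|n|}$ for $n<0$; $\varphi:X\to P_d(\mathbb{Z})$ is $(E,\varepsilon)$-equivariant if $\rho(\varphi(y),\alpha_n(\varphi(x)))<\varepsilon$ for all $n\in E$, $y\in T^n(\{x\})$; ${\rm dim}_{\rm am}(X,T)$ is the least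 $d$ such that for all finite $E\subseteq\mathbb{Z}$, $\varepsilon>0$ a continuous $(E,\varepsilon)$-equivariant $\varphi:X\to P_d(\mathbb{Z})$ exists. *)

theory Defs
  imports "HOL-Analysis.Analysis"
begin

definition local_homeo :: "('a::topological_space \<Rightarrow> 'a) \<Rightarrow> bool" where
  "local_homeo T \<longleftrightarrow> (\<forall>x. \<exists>U. open U \<and> x \<in> U \<and> open (T ` U) \<and>
      (\<exists>g. homeomorphism U (T ` U) T g))"

definition Sp_l :: "('a \<Rightarrow> 'a) \<Rightarrow> 'a set" where
  "Sp_l T = {x. \<exists>y z. y \<noteq> z \<and> T y = x \<and> T z = x}"

definition DR :: "('a \<Rightarrow> 'a) \<Rightarrow> ('a \<times> int \<times> 'a) set" where
  "DR T = {(x, k, y). \<exists>m n. (T ^^ m) x = (T ^^ n) y \<and> k = int m - int n}"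

definition Zset :: "('a \<Rightarrow> 'a) \<Rightarrow> 'a set \<Rightarrow> nat \<Rightarrow> nat \<Rightarrow> 'a set \<Rightarrow> ('a \<times> int \<times> 'a) set" where
  "Zset T U m n V = {(x, k, y). x \<in> U \<and> y \<in> V \<and> (T ^^ m) x = (T ^^ n) y \<and> k = int m - int n}"

definition DR_top :: "('a::topological_space \<Rightarrow> 'a) \<Rightarrow> ('a \<times> int \<times> 'a) topology" where
  "DR_top T = topology_generated_by {Zset T U m n V | U m n V. open U \<and> open V}"

definition rng :: "'a \<times> int \<times> 'a \<Rightarrow> 'a" where "rng g = fst g"
definition src :: "'a \<times> int \<times> 'a \<Rightarrow> 'a" where "src g = snd (snd g)"

definition subgroupoid :: "('a \<Rightarrow> 'a) \<Rightarrow> ('a \<times> int \<times> 'a) set \<Rightarrow> bool" where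
  "subgroupoid T H \<longleftrightarrow> H \<subseteq> DR T \<and>
     (\<forall>x k y l z. (x, k, y) \<in> H \<and> (y, l, z) \<in> H \<longrightarrow> (x, k + l, z) \<in> H) \<and>
     (\<forall>x k y. (x, k, y) \<in> H \<longrightarrow> (y, -k, x) \<in> H)"

definition rel_compact :: "('a::topological_space \<Rightarrow> 'a) \<Rightarrow> ('a \<times> int \<times> 'a) set \<Rightarrow> bool" where
  "rel_compact T K \<longleftrightarrow> K \<subseteq> DR T \<and> compactin (DR_top T) ((DR_top T) closure_of K)"

definition dad_le :: "('a::topological_space \<Rightarrow> 'a) \<Rightarrow> nat \<Rightarrow> bool" where
  "dad_le T d \<longleftrightarrow> (\<forall>K. openin (DR_top T) K \<and> rel_compact T K \<longrightarrow>
     (\<exists>U :: nat \<Rightarrow> 'a set. (\<forall>i\<le>d. open (U i)) \<and>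
        src ` K \<union> rng ` K \<subseteq> (\<Union>i\<le>d. U i) \<and>
        (\<forall>i\<le>d. \<exists>H. subgroupoid T H \<and> rel_compact T H \<and>
            {g \<in> K. src g \<in> U i \<and> rng g \<in> U i} \<subseteq> H)))"

text \<open>P_d(Z): probability measures on Z supported on at most d+1 points,
represented by their mass functions.\<close>
definition Pd :: "nat \<Rightarrow> (int \<Rightarrow> real) set" where
  "Pd d = {\<mu>. (\<forall>m. \<mu> m \<ge> 0) \<and> finite {m. \<mu> m \<noteq> 0} \<and> card {m. \<mu> m \<noteq> 0} \<le> d + 1
             \<and> (\<Sum>m\<in>{m. \<mu> m \<noteq> 0}. \<mu> m) = 1}"

definition rho :: "(int \<Rightarrow> real) \<Rightarrow> (int \<Rightarrow> real) \<Rightarrow> real" where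
  "rho \<mu> \<nu> = (\<Sum>m\<in>{m. \<mu> m \<noteq> 0} \<union> {m. \<nu> m \<noteq> 0}. \<bar>\<mu> m - \<nu> m\<bar>)"

definition shift :: "int \<Rightarrow> (int \<Rightarrow> real) \<Rightarrow> (int \<Rightarrow> real)" where
  "shift n \<mu> = (\<lambda>m. \<mu> (m - n))"

definition Tn_set :: "('a \<Rightarrow> 'a) \<Rightarrow> int \<Rightarrow> 'a \<Rightarrow> 'a set" where
  "Tn_set T n x = (if n \<ge> 0 then {(T ^^ nat n) x} else {y. (T ^^ nat (- n)) y = x})"

definition equivariant :: "('a \<Rightarrow> 'a) \<Rightarrow> int set \<Rightarrow> real \<Rightarrow> ('a \<Rightarrow> int \<Rightarrow> real) \<Rightarrow> bool" where
  "equivariant T E \<epsilon> \<phi> \<longleftrightarrow>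
     (\<forall>n\<in>E. \<forall>x. \<forall>y\<in>Tn_set T n x. rho (\<phi> y) (shift n (\<phi> x)) < \<epsilon>)"

definition rho_continuous :: "('a::metric_space \<Rightarrow> int \<Rightarrow> real) \<Rightarrow> bool" where
  "rho_continuous \<phi> \<longleftrightarrow> (\<forall>x \<epsilon>. \<epsilon> > 0 \<longrightarrow>
      (\<exists>\<delta>>0. \<forall>y. dist y x < \<delta> \<longrightarrow> rho (\<phi> y) (\<phi> x) < \<epsilon>))"

definition dim_am_le :: "('a::metric_space \<Rightarrow> 'a) \<Rightarrow> nat \<Rightarrow> bool" where
  "dim_am_le T d \<longleftrightarrow> (\<forall>E \<epsilon>. finite E \<and> \<epsilon> > 0 \<longrightarrow>
     (\<exists>\<phi>. (\<forall>x. \<phi> x \<in> Pd d) \<and> rho_continuous \<phi> \<and> equivariant T E \<epsilon> \<phi>))"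

end

theory Submission
  imports Defs
begin


lemma lh_cont:
  fixes T :: "'a::metric_space \<Rightarrow> 'a"
  assumes "local_homeo T" shows "continuous_on UNIV T"
proof -
  have "isCont T x" for x
  proof -
    obtain U g where U: "open U" "x \<in> U" "homeomorphism U (T ` U) T g"
      using assms unfolding local_homeo_def by blast
    then have "continuous_on U T" by (simp add: homeomorphism_def)
    then show ?thesis using U continuous_on_eq_continuous_at by blast
  qed
  then show ?thesis by (simp add: continuous_at_imp_continuous_on)
qed

lemma lh_inj:
  fixes T :: "'a::metric_space \<Rightarrow> 'a"
  assumes "local_homeo T" shows "\<exists>W. open W \<and> w \<in> W \<and> inj_on T W"
proof -
  obtain U g where U: "open U" "w \<in> U" "homeomorphism U (T ` U) T g"
    using assms unfolding local_homeo_def by blast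
  then have "inj_on T U" by (metis homeomorphism_def inj_on_inverseI)
  then show ?thesis using U by blast
qed

lemma funpow_cont:
  fixes T :: "'a::metric_space \<Rightarrow> 'a"
  assumes "continuous_on UNIV T" shows "continuous_on UNIV (T ^^ n)"
proof (induction n)
  case 0 then show ?case by (simp add: continuous_on_id continuous_on_id')
next
  case (Suc n)
  have "T ^^ Suc n = T \<circ> (T ^^ n)" by simp
  then show ?case using Suc assms
    by (metis continuous_on_compose continuous_on_subset subset_UNIV)
qed

lemma funpow_inj:
  fixes T :: "'a::metric_space \<Rightarrow> 'a"
  assumes "local_homeo T" shows "\<exists>W. open W \<and> w \<in> W \<and> inj_on (T ^^ p) W"
proof (induction p arbitrary: w)
  case 0 then show ?case by (intro exI[of _ UNIV]) auto
next
  case (Suc p)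
  obtain A where A: "open A" "w \<in> A" "inj_on T A" using lh_inj[OF assms] by blast
  obtain B where B: "open B" "T w \<in> B" "inj_on (T ^^ p) B" using Suc by blast
  have c: "continuous_on UNIV T" using lh_cont[OF assms] .
  let ?W = "A \<inter> T -` B"
  have "open ?W" using A(1) B(1) c open_vimage by blast
  moreover have "w \<in> ?W" using A B by auto
  moreover have "inj_on (T ^^ Suc p) ?W"
  proof (rule inj_onI)
    fix u v assume uv: "u \<in> ?W" "v \<in> ?W" "(T ^^ Suc p) u = (T ^^ Suc p) v"
    then have "(T ^^ p) (T u) = (T ^^ p) (T v)" by (simp add: funpow_Suc_right del: funpow.simps)
    then have "T u = T v" using B(3) uv by (auto dest: inj_onD)
    then show "u = v" using A(3) uv by (auto dest: inj_onD)
  qed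
  ultimately show ?case by blast
qed

lemma topspace_DR: "topspace (DR_top T) = DR T"
  unfolding DR_top_def topology_generated_by_topspace
proof
  show "\<Union> {Zset T U m n V |U m n V. open U \<and> open V} \<subseteq> DR T"
    by (auto simp: Zset_def DR_def)
  show "DR T \<subseteq> \<Union> {Zset T U m n V |U m n V. open U \<and> open V}"
  proof
    fix g assume "g \<in> DR T"
    then obtain x k y m n where g: "g = (x,k,y)" "(T ^^ m) x = (T ^^ n) y" "k = int m - int n"
      by (auto simp: DR_def)
    then have "g \<in> Zset T UNIV m n UNIV" by (simp add: Zset_def)
    then show "g \<in> \<Union> {Zset T U m n V |U m n V. open U \<and> open V}" by blast
  qed
qed

lemma openin_Zset: "open U \<Longrightarrow> open V \<Longrightarrow> openin (DR_top T) (Zset T U m n V)"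
  unfolding DR_top_def by (rule topology_generated_by_Basis) blast

lemma Zset_DR: "Zset T U m n V \<subseteq> DR T"
  by (auto simp: Zset_def DR_def)

lemma closedin_piece:
  fixes T :: "'a::metric_space \<Rightarrow> 'a"
  assumes lh: "local_homeo T"
  shows "closedin (DR_top T) (Zset T UNIV m n UNIV)"
  unfolding closedin_def topspace_DR
proof (intro conjI)
  show "Zset T UNIV m n UNIV \<subseteq> DR T" by (rule Zset_DR)
  show "openin (DR_top T) (DR T - Zset T UNIV m n UNIV)"
  proof (subst openin_subopen, intro ballI)
    fix g assume g: "g \<in> DR T - Zset T UNIV m n UNIV"
    then obtain x k y m' n' where gg: "g = (x,k,y)" "(T ^^ m') x = (T ^^ n') y" "k = int m' - int n'"
      by (auto simp: DR_def)
    show "\<exists>W. openin (DR_top T) W \<and> g \<in> W \<and> W \<subseteq> DR T - Zset T UNIV m n UNIV"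
    proof (cases "k = int m - int n")
      case False
      have "Zset T UNIV m' n' UNIV \<subseteq> DR T - Zset T UNIV m n UNIV"
        using False gg by (auto simp: Zset_def DR_def)
      moreover have "g \<in> Zset T UNIV m' n' UNIV" using gg by (simp add: Zset_def)
      ultimately show ?thesis using openin_Zset[of UNIV UNIV T m' n'] by blast
    next
      case True
      then have ne: "(T ^^ m) x \<noteq> (T ^^ n) y" using g gg by (auto simp: Zset_def)
      obtain A B where AB: "open A" "open B" "(T ^^ m) x \<in> A" "(T ^^ n) y \<in> B" "A \<inter> B = {}"
        using separation_t2[of "(T ^^ m) x" "(T ^^ n) y"] ne by blast
      have c: "continuous_on UNIV (T ^^ q)" for q using funpow_cont[OF lh_cont[OF lh]] .
      let ?U = "(T ^^ m) -` A" and ?V = "(T ^^ n) -` B"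
      have o: "open ?U" "open ?V" using c AB open_vimage by blast+
      have "Zset T ?U m' n' ?V \<subseteq> DR T - Zset T UNIV m n UNIV"
        using AB by (auto simp: Zset_def DR_def)
      moreover have "g \<in> Zset T ?U m' n' ?V" using gg AB by (simp add: Zset_def)
      ultimately show ?thesis using openin_Zset[OF o] by blast
    qed
  qed
qed

lemma compactin_piece:
  fixes T :: "'a::metric_space \<Rightarrow> 'a"
  assumes cpt: "compact (UNIV :: 'a set)" and lh: "local_homeo T"
  shows "compactin (DR_top T) (Zset T UNIV m n UNIV)"
proof -
  have c: "continuous_on UNIV (T ^^ q)" for q using funpow_cont[OF lh_cont[OF lh]] .
  define Q where "Q = {z :: 'a \<times> 'a. (T ^^ m) (fst z) = (T ^^ n) (snd z)}"
  have "closed Q" unfolding Q_def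
    by (intro closed_Collect_eq continuous_on_compose2[OF c] continuous_on_fst continuous_on_snd continuous_on_id) auto
  moreover have "compact ((UNIV :: 'a set) \<times> (UNIV :: 'a set))" by (rule compact_Times[OF cpt cpt])
  ultimately have "compact Q" using compact_Int_closed[of "UNIV \<times> UNIV" Q] by simp
  then have cQ: "compactin (top_of_set Q) Q" by (simp add: compactin_subtopology)
  define \<iota> where "\<iota> = (\<lambda>z :: 'a \<times> 'a. (fst z, int m - int n, snd z))"
  have img: "\<iota> ` Q = Zset T UNIV m n UNIV"
    unfolding Q_def \<iota>_def Zset_def by (auto simp: image_iff)
  have "continuous_map (top_of_set Q) (DR_top T) \<iota>"
    unfolding DR_top_def
  proof (rule continuous_on_generated_topo)
    show "\<iota> ` topspace (top_of_set Q) \<subseteq> \<Union> {Zset T U m n V |U m n V. open U \<and> open V}"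
    proof
      fix w assume "w \<in> \<iota> ` topspace (top_of_set Q)"
      then have "w \<in> Zset T UNIV m n UNIV" using img by auto
      then show "w \<in> \<Union> {Zset T U m n V |U m n V. open U \<and> open V}" by blast
    qed
  next
    fix Z assume "Z \<in> {Zset T U m n V |U m n V. open U \<and> open V}"
    then obtain U V m' n' where Z: "Z = Zset T U m' n' V" "open U" "open V" by blast
    show "openin (top_of_set Q) (\<iota> -` Z \<inter> topspace (top_of_set Q))"
    proof (subst openin_subopen, intro ballI)
      fix z assume zin: "z \<in> \<iota> -` Z \<inter> topspace (top_of_set Q)"
      obtain x y where z: "z = (x,y)" by (cases z)
      have zz: "x \<in> U" "y \<in> V" "(T ^^ m') x = (T ^^ n') y" "int m - int n = int m' - int n'"
        "(T ^^ m) x = (T ^^ n) y"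
        using zin Z unfolding z \<iota>_def Zset_def Q_def by auto
      show "\<exists>W. openin (top_of_set Q) W \<and> z \<in> W \<and> W \<subseteq> \<iota> -` Z \<inter> topspace (top_of_set Q)"
      proof (cases "m \<le> m'")
        case True
        define j where "j = m' - m"
        have m': "m' = j + m" and n': "n' = j + n" using True zz(4) unfolding j_def by auto
        have "Q \<inter> (U \<times> V) \<subseteq> \<iota> -` Z \<inter> topspace (top_of_set Q)"
          using zz(4) unfolding Z Q_def \<iota>_def Zset_def m' n' by (auto simp: funpow_add)
        moreover have "openin (top_of_set Q) (Q \<inter> (U \<times> V))"
          using Z by (intro openin_open_Int open_Times) auto
        moreover have "z \<in> Q \<inter> (U \<times> V)" using zin zz unfolding z by auto
        ultimately show ?thesis by blast
      next
        case False
        define p where "p = m - m'"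
        have m: "m = p + m'" and n: "n = p + n'" using False zz(4) unfolding p_def by auto
        obtain W where W: "open W" "(T ^^ m') x \<in> W" "inj_on (T ^^ p) W"
          using funpow_inj[OF lh] by blast
        let ?O = "((T ^^ m') -` W \<inter> U) \<times> ((T ^^ n') -` W \<inter> V)"
        have oO: "open ?O" using W(1) Z c by (intro open_Times open_Int open_vimage) auto
        have "Q \<inter> ?O \<subseteq> \<iota> -` Z \<inter> topspace (top_of_set Q)"
        proof
          fix w assume w: "w \<in> Q \<inter> ?O"
          obtain a b where ab: "w = (a,b)" by (cases w)
          have "(T ^^ p) ((T ^^ m') a) = (T ^^ p) ((T ^^ n') b)"
            using w unfolding ab Q_def m n by (simp add: funpow_add)
          then have "(T ^^ m') a = (T ^^ n') b" using W(3) w unfolding ab by (auto dest: inj_onD)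
          then show "w \<in> \<iota> -` Z \<inter> topspace (top_of_set Q)"
            using w zz(4) unfolding ab Z \<iota>_def Zset_def by auto
        qed
        moreover have "z \<in> Q \<inter> ?O" using zin zz W unfolding z by auto
        ultimately show ?thesis using openin_open_Int[OF oO, of Q] by blast
      qed
    qed
  qed
  from image_compactin[OF cQ this] show ?thesis using img by simp
qed



definition msupp :: "(int \<Rightarrow> real) \<Rightarrow> int set" where "msupp \<mu> = {m. \<mu> m \<noteq> 0}"

lemma coord_le_rho:
  assumes "finite (msupp \<mu>)" "finite (msupp \<nu>)"
  shows "\<bar>\<mu> m - \<nu> m\<bar> \<le> rho \<mu> \<nu>"
proof -
  let ?A = "{m. \<mu> m \<noteq> 0} \<union> {m. \<nu> m \<noteq> 0}"
  have fA: "finite ?A" using assms by (simp add: msupp_def)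
  show ?thesis
  proof (cases "m \<in> ?A")
    case True
    then show ?thesis unfolding rho_def
      by (rule member_le_sum[OF _ _ fA, where f = "\<lambda>m. \<bar>\<mu> m - \<nu> m\<bar>"]) auto
  next
    case False
    then have "\<bar>\<mu> m - \<nu> m\<bar> = 0" by auto
    also have "0 \<le> rho \<mu> \<nu>" unfolding rho_def by (rule sum_nonneg) auto
    finally show ?thesis .
  qed
qed

lemma msupp_shift: "msupp (shift n \<mu>) = (\<lambda>s. s + n) ` msupp \<mu>"
  unfolding msupp_def shift_def by (auto simp: image_iff) (metis diff_add_cancel)

lemma Pd_finite: "\<mu> \<in> Pd d \<Longrightarrow> finite (msupp \<mu>)"
  by (simp add: Pd_def msupp_def)

lemma Pd_shift_finite: "\<mu> \<in> Pd d \<Longrightarrow> finite (msupp (shift n \<mu>))"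
  by (simp add: msupp_shift Pd_finite)

definition good :: "(int \<Rightarrow> real) \<Rightarrow> int set \<Rightarrow> real \<Rightarrow> real \<Rightarrow> bool" where
  "good \<mu> S a b \<longleftrightarrow> a < b \<and> (\<forall>s\<in>S. b < \<mu> s) \<and> (\<forall>t. t \<notin> S \<longrightarrow> \<mu> t < a)"

lemma good_unique:
  assumes "finite S" "finite S'" "card S = card S'" "good \<mu> S a b" "good \<mu> S' a' b'"
  shows "S = S'"
proof (rule ccontr)
  assume ne: "S \<noteq> S'"
  have "\<not> S \<subseteq> S'" using assms ne card_subset_eq by blast
  then obtain s where s: "s \<in> S" "s \<notin> S'" by blast
  have "\<not> S' \<subseteq> S" using assms ne card_subset_eq by metis
  then obtain t where t: "t \<in> S'" "t \<notin> S" by blast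
  have "b < \<mu> s" "\<mu> s < a'" "b' < \<mu> t" "\<mu> t < a" "a < b" "a' < b'"
    using assms(4,5) s t unfolding good_def by auto
  then show False by linarith
qed

lemma good_shift:
  assumes "good \<mu> S a b" shows "good (shift n \<mu>) ((\<lambda>s. s + n) ` S) a b"
  using assms unfolding good_def shift_def
  by (auto simp: image_iff) (metis add_diff_cancel_right' diff_add_cancel)

lemma good_perturb:
  assumes "good \<mu> S a b" "\<And>t. \<bar>\<nu> t - \<mu> t\<bar> < e" "a + e < b - e"
  shows "good \<nu> S (a + e) (b - e)"
  using assms unfolding good_def
  by (smt (verit, best))

lemma good_cover:
  fixes d :: nat
  assumes "\<mu> \<in> Pd d"
  defines "\<eta> \<equiv> 1 / ((real d + 1) * (real d + 3))"
  shows "\<exists>S a b. finite S \<and> 1 \<le> card S \<and> card S \<le> d + 1 \<and> good \<mu> S a b \<and> b - a > \<eta> / 2"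
proof -
  have nn: "\<And>m. \<mu> m \<ge> 0" and fin: "finite (msupp \<mu>)" and cd: "card (msupp \<mu>) \<le> d + 1"
    and sm: "(\<Sum>m\<in>msupp \<mu>. \<mu> m) = 1"
    using assms(1) by (auto simp: Pd_def msupp_def)
  have eta: "\<eta> > 0" unfolding \<eta>_def by simp
  have "(real d + 1) * (real d + 3) > 0" by simp
  then have eta2: "(real d + 3) * \<eta> = 1 / (real d + 1)" unfolding \<eta>_def by (simp add: field_simps)
  have "\<exists>m. \<mu> m \<ge> 1 / (real d + 1)"
  proof (rule ccontr)
    assume "\<not> ?thesis"
    then have lt: "\<And>m. \<mu> m < 1 / (real d + 1)" by (simp add: not_le)
    have "msupp \<mu> \<noteq> {}" using sm by auto
    then have "(\<Sum>m\<in>msupp \<mu>. \<mu> m) < (\<Sum>m\<in>msupp \<mu>. 1 / (real d + 1))"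
      using fin lt by (intro sum_strict_mono) auto
    also have "\<dots> = real (card (msupp \<mu>)) / (real d + 1)" by simp
    also have "\<dots> \<le> 1" using cd by (simp add: field_simps)
    finally show False using sm by simp
  qed
  then obtain m0 where m0: "\<mu> m0 \<ge> 1 / (real d + 1)" by blast
  define V where "V = \<mu> ` msupp \<mu>"
  have fV: "finite V" and cV: "card V \<le> d + 1"
    using fin cd card_image_le[OF fin, of \<mu>] unfolding V_def by auto
  have "\<exists>j\<in>{1..d+2}. \<forall>v\<in>V. \<not> (real j * \<eta> \<le> v \<and> v < (real j + 1) * \<eta>)"
  proof (rule ccontr)
    assume "\<not> ?thesis"
    then have H: "\<forall>j\<in>{1..d+2}. \<exists>v\<in>V. real j * \<eta> \<le> v \<and> v < (real j + 1) * \<eta>" by blast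
    define f where "f v = nat \<lfloor>v / \<eta>\<rfloor>" for v
    have "{1..d+2} \<subseteq> f ` V"
    proof
      fix j assume j: "j \<in> {1..d+2}"
      then obtain v where v: "v \<in> V" "real j * \<eta> \<le> v" "v < (real j + 1) * \<eta>" using H by blast
      have "real j \<le> v / \<eta>" "v / \<eta> < real j + 1"
        using v eta by (simp_all add: pos_le_divide_eq pos_divide_less_eq)
      then have "\<lfloor>v / \<eta>\<rfloor> = int j" by (simp add: floor_eq_iff)
      then have "f v = j" unfolding f_def by simp
      then show "j \<in> f ` V" using v by blast
    qed
    then have "card {1..d+2} \<le> card (f ` V)" using fV by (intro card_mono) auto
    also have "\<dots> \<le> card V" using fV by (rule card_image_le)
    finally show False using cV by simp
  qed
  then obtain j where j: "j \<in> {1..d+2}" "\<forall>v\<in>V. \<not> (real j * \<eta> \<le> v \<and> v < (real j + 1) * \<eta>)"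
    by blast
  define S where "S = {m. (real j + 1) * \<eta> \<le> \<mu> m}"
  define a where "a = real j * \<eta>"
  define b where "b = (real j + 1) * \<eta> - \<eta> / 4"
  have Ssub: "S \<subseteq> msupp \<mu>"
    unfolding S_def msupp_def using eta
    by auto (smt (verit, ccfv_SIG) mult_pos_pos of_nat_0_le_iff)
  have fS: "finite S" using Ssub fin finite_subset by blast
  have cS: "card S \<le> d + 1" using card_mono[OF fin Ssub] cd by simp
  have "(real j + 1) * \<eta> \<le> (real d + 3) * \<eta>" using j(1) eta by (intro mult_right_mono) auto
  then have "m0 \<in> S" using m0 eta2 unfolding S_def by simp
  then have c1: "1 \<le> card S" using fS by (metis One_nat_def Suc_leI card_gt_0_iff empty_iff)
  have g: "good \<mu> S a b"
    unfolding good_def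
  proof (intro conjI ballI allI impI)
    show "a < b" unfolding a_def b_def using eta by (simp add: algebra_simps)
  next
    fix s assume "s \<in> S" then show "b < \<mu> s" unfolding S_def b_def using eta by simp
  next
    fix t assume t: "t \<notin> S"
    then have lt: "\<mu> t < (real j + 1) * \<eta>" unfolding S_def by simp
    show "\<mu> t < a"
    proof (rule ccontr)
      assume "\<not> \<mu> t < a"
      then have ge: "real j * \<eta> \<le> \<mu> t" unfolding a_def by simp
      have "real j * \<eta> > 0" using j(1) eta by simp
      then have "t \<in> msupp \<mu>" using ge unfolding msupp_def by auto
      then have "\<mu> t \<in> V" unfolding V_def by blast
      then show False using j(2) ge lt by blast
    qed
  qed
  have "b - a > \<eta> / 2" unfolding a_def b_def using eta by (simp add: algebra_simps)
  then show ?thesis using fS c1 cS g by blast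
qed



lemma open_goodset:
  fixes \<phi> :: "'a::metric_space \<Rightarrow> int \<Rightarrow> real"
  assumes rc: "rho_continuous \<phi>" and P: "\<And>x. \<phi> x \<in> Pd d"
  shows "open {x. \<exists>S a b. finite S \<and> card S = Suc i \<and> good (\<phi> x) S a b \<and> b - a > c}"
  unfolding open_dist
proof (intro ballI)
  fix x assume "x \<in> {x. \<exists>S a b. finite S \<and> card S = Suc i \<and> good (\<phi> x) S a b \<and> b - a > c}"
  then obtain S a b where Sab: "finite S" "card S = Suc i" "good (\<phi> x) S a b" "b - a > c" by blast
  have Sne: "S \<noteq> {}" using Sab(2) by auto
  define e1 where "e1 = Min ((\<lambda>s. \<phi> x s - b) ` S)"
  have e1: "e1 > 0" unfolding e1_def using Sab Sne by (auto simp: good_def)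
  have e1le: "\<And>s. s \<in> S \<Longrightarrow> e1 \<le> \<phi> x s - b" unfolding e1_def using Sab(1) by auto
  define A where "A = {\<phi> x t | t. t \<notin> S}"
  have "A \<subseteq> insert 0 (\<phi> x ` msupp (\<phi> x))" unfolding A_def msupp_def by auto
  then have fA: "finite A" using Pd_finite[OF P] finite_subset by blast
  obtain t0 where "t0 \<notin> S" using Sab(1) ex_new_if_finite infinite_UNIV_int by blast
  then have Ane: "A \<noteq> {}" unfolding A_def by auto
  have "\<forall>v\<in>A. v < a" using Sab(3) unfolding A_def good_def by auto
  then have MA: "Max A < a" using fA Ane by simp
  define e2 where "e2 = a - Max A"
  have e2: "e2 > 0" using MA unfolding e2_def by simp
  define r where "r = min e1 e2"
  have r: "r > 0" using e1 e2 unfolding r_def by simp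
  obtain \<delta> where \<delta>: "\<delta> > 0" "\<And>y. dist y x < \<delta> \<Longrightarrow> rho (\<phi> y) (\<phi> x) < r"
    using rc r unfolding rho_continuous_def by blast
  show "\<exists>e>0. \<forall>y. dist y x < e \<longrightarrow> y \<in> {x. \<exists>S a b. finite S \<and> card S = Suc i \<and> good (\<phi> x) S a b \<and> b - a > c}"
  proof (intro exI[of _ \<delta>] conjI allI impI)
    show "\<delta> > 0" by fact
    fix y assume "dist y x < \<delta>"
    then have "rho (\<phi> y) (\<phi> x) < r" using \<delta> by blast
    then have co: "\<And>t. \<bar>\<phi> y t - \<phi> x t\<bar> < r"
      using coord_le_rho[OF Pd_finite[OF P] Pd_finite[OF P]] by (meson le_less_trans)
    have "good (\<phi> y) S a b" unfolding good_def
    proof (intro conjI ballI allI impI)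
      show "a < b" using Sab(3) by (simp add: good_def)
    next
      fix s assume s: "s \<in> S"
      have "e1 \<le> \<phi> x s - b" using e1le[OF s] .
      moreover have "r \<le> e1" unfolding r_def by simp
      ultimately show "b < \<phi> y s" using co[of s] by linarith
    next
      fix t assume t: "t \<notin> S"
      then have "\<phi> x t \<in> A" unfolding A_def by blast
      then have "\<phi> x t \<le> Max A" using fA by simp
      moreover have "r \<le> e2" unfolding r_def by simp
      ultimately show "\<phi> y t < a" using co[of t] unfolding e2_def by linarith
    qed
    then show "y \<in> {x. \<exists>S a b. finite S \<and> card S = Suc i \<and> good (\<phi> x) S a b \<and> b - a > c}"
      using Sab by blast
  qed
qed

lemma finite_big:
  fixes \<phi> :: "'a::metric_space \<Rightarrow> int \<Rightarrow> real"
  assumes cpt: "compact (UNIV :: 'a set)" and rc: "rho_continuous \<phi>" and P: "\<And>x. \<phi> x \<in> Pd d"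
    and c: "c > 0"
  shows "finite {m. \<exists>x. \<phi> x m > c}"
proof -
  have "\<forall>x. \<exists>\<delta>>0. \<forall>y. dist y x < \<delta> \<longrightarrow> rho (\<phi> y) (\<phi> x) < c / 2"
    using rc c unfolding rho_continuous_def by (meson half_gt_zero)
  then obtain \<delta> where \<delta>: "\<And>x. \<delta> x > 0" "\<And>x y. dist y x < \<delta> x \<Longrightarrow> rho (\<phi> y) (\<phi> x) < c / 2"
    by metis
  have "UNIV \<subseteq> (\<Union>x\<in>UNIV. ball x (\<delta> x))" using \<delta>(1) by auto
  then obtain C where C: "finite C" "UNIV \<subseteq> (\<Union>x\<in>C. ball x (\<delta> x))"
    using compactE_image[OF cpt, of UNIV "\<lambda>x. ball x (\<delta> x)"] by auto
  have "{m. \<exists>x. \<phi> x m > c} \<subseteq> (\<Union>x\<in>C. msupp (\<phi> x))"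
  proof
    fix m assume "m \<in> {m. \<exists>x. \<phi> x m > c}"
    then obtain y where y: "\<phi> y m > c" by blast
    obtain x where x: "x \<in> C" "y \<in> ball x (\<delta> x)" using C by blast
    then have "rho (\<phi> y) (\<phi> x) < c / 2" using \<delta>(2) by (simp add: dist_commute)
    then have "\<bar>\<phi> y m - \<phi> x m\<bar> < c / 2"
      using coord_le_rho[OF Pd_finite[OF P] Pd_finite[OF P]] by (meson le_less_trans)
    then have "\<phi> x m \<noteq> 0" using y c by linarith
    then show "m \<in> (\<Union>x\<in>C. msupp (\<phi> x))" using x unfolding msupp_def by blast
  qed
  moreover have "finite (\<Union>x\<in>C. msupp (\<phi> x))" using C(1) Pd_finite[OF P] by blast
  ultimately show ?thesis using finite_subset by blast
qed

lemma Tn_pos: "(T ^^ m) x = z \<Longrightarrow> z \<in> Tn_set T (int m) x"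
  by (simp add: Tn_set_def)

lemma Tn_neg: "(T ^^ n) y = z \<Longrightarrow> y \<in> Tn_set T (- int n) z"
  by (cases "n = 0") (auto simp: Tn_set_def)

lemma finite_bound_Zset:
  assumes "finite F" "F \<subseteq> {Zset T UNIV m n UNIV | m n. True}"
  shows "\<exists>M. \<forall>Z\<in>F. \<exists>m n. m \<le> M \<and> n \<le> M \<and> Z = Zset T UNIV m n UNIV"
  using assms
proof (induction F rule: finite_induct)
  case empty then show ?case by simp
next
  case (insert Z F)
  then have "F \<subseteq> {Zset T UNIV m n UNIV | m n. True}" by simp
  then obtain M where M: "\<forall>Z\<in>F. \<exists>m n. m \<le> M \<and> n \<le> M \<and> Z = Zset T UNIV m n UNIV"
    using insert.IH by blast
  obtain m0 n0 where mn: "Z = Zset T UNIV m0 n0 UNIV" using insert.prems by blast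
  show ?case
  proof (rule exI[of _ "max M (m0 + n0)"], intro ballI)
    fix Z' assume "Z' \<in> insert Z F"
    then consider "Z' = Z" | "Z' \<in> F" by blast
    then show "\<exists>m n. m \<le> max M (m0 + n0) \<and> n \<le> max M (m0 + n0) \<and> Z' = Zset T UNIV m n UNIV"
    proof cases
      case 1 then show ?thesis using mn by (intro exI[of _ m0] exI[of _ n0]) auto
    next
      case 2
      then obtain m' n' where "m' \<le> M" "n' \<le> M" "Z' = Zset T UNIV m' n' UNIV" using M by blast
      then show ?thesis by (intro exI[of _ m'] exI[of _ n']) auto
    qed
  qed
qed


theorem lemma5p11:
  fixes T :: "'a::metric_space \<Rightarrow> 'a" and d :: nat
  assumes "compact (UNIV :: 'a set)"
    and "surj T"
    and "local_homeo T"
    and "finite (Sp_l T)"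
    and "\<forall>x\<in>Sp_l T. open {x}"
    and "dim_am_le T d"
  shows "dad_le T d"
  unfolding dad_le_def
proof (intro allI impI)
  note cpt = assms(1) and lh = assms(3) and dim = assms(6)
  fix K assume K: "openin (DR_top T) K \<and> rel_compact T K"
  have KDR: "K \<subseteq> DR T" and cK: "compactin (DR_top T) ((DR_top T) closure_of K)"
    using K unfolding rel_compact_def by auto
  obtain M where KM: "\<And>g. g \<in> K \<Longrightarrow> \<exists>m n. m \<le> M \<and> n \<le> M \<and> g \<in> Zset T UNIV m n UNIV"
  proof -
    let ?U = "{Zset T UNIV m n UNIV | m n. True}"
    have clsub: "(DR_top T) closure_of K \<subseteq> DR T"
      using closure_of_subset_topspace[of "DR_top T" K] unfolding topspace_DR .
    have cov: "(DR_top T) closure_of K \<subseteq> \<Union> ?U"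
    proof
      fix g assume "g \<in> (DR_top T) closure_of K"
      then have "g \<in> DR T" using clsub by (rule subsetD[rotated])
      then obtain x k y m n where "g = (x,k,y)" "(T ^^ m) x = (T ^^ n) y" "k = int m - int n"
        by (auto simp: DR_def)
      then have "g \<in> Zset T UNIV m n UNIV" by (simp add: Zset_def)
      then show "g \<in> \<Union> ?U" by blast
    qed
    have opn: "\<forall>u\<in>?U. openin (DR_top T) u"
    proof
      fix u assume "u \<in> ?U"
      then obtain m n where "u = Zset T UNIV m n UNIV" by blast
      then show "openin (DR_top T) u" using openin_Zset[OF open_UNIV open_UNIV] by simp
    qed
    have cc: "\<forall>U. (\<forall>u\<in>U. openin (DR_top T) u) \<and> (DR_top T) closure_of K \<subseteq> \<Union>U \<longrightarrow>
        (\<exists>F. finite F \<and> F \<subseteq> U \<and> (DR_top T) closure_of K \<subseteq> \<Union>F)"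
      using cK unfolding compactin_def by (rule conjunct2)
    have "\<exists>F. finite F \<and> F \<subseteq> ?U \<and> (DR_top T) closure_of K \<subseteq> \<Union>F"
      using cc[rule_format, OF conjI[OF opn cov]] .
    then obtain F where F: "finite F" "F \<subseteq> ?U" "(DR_top T) closure_of K \<subseteq> \<Union> F"
      by blast
    obtain M where M: "\<forall>Z\<in>F. \<exists>m n. m \<le> M \<and> n \<le> M \<and> Z = Zset T UNIV m n UNIV"
      using finite_bound_Zset[OF F(1,2)] by blast
    have Ksub: "K \<subseteq> (DR_top T) closure_of K"
      by (rule closure_of_subset) (simp add: topspace_DR KDR)
    have "\<exists>m n. m \<le> M \<and> n \<le> M \<and> g \<in> Zset T UNIV m n UNIV" if g: "g \<in> K" for g
    proof -
      have "g \<in> \<Union> F" using g Ksub F(3) by blast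
      then obtain Z where Z: "Z \<in> F" "g \<in> Z" by blast
      obtain m n where "m \<le> M" "n \<le> M" "Z = Zset T UNIV m n UNIV" using M Z(1) by blast
      then show ?thesis using Z(2) by blast
    qed
    then show ?thesis using that by blast
  qed
  define \<eta> where "\<eta> = 1 / ((real d + 1) * (real d + 3))"
  have eta: "\<eta> > 0" unfolding \<eta>_def by simp
  define \<epsilon> where "\<epsilon> = \<eta> / 16"
  have eps: "\<epsilon> > 0" unfolding \<epsilon>_def using eta by simp
  define E where "E = {- int M .. int M}"
  obtain \<phi> where P: "\<And>x. \<phi> x \<in> Pd d" and rc: "rho_continuous \<phi>" and eq: "equivariant T E \<epsilon> \<phi>"
    proof -
    have "finite E" unfolding E_def by simp
    then have "\<exists>\<phi>. (\<forall>x. \<phi> x \<in> Pd d) \<and> rho_continuous \<phi> \<and> equivariant T E \<epsilon> \<phi>"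
      using dim eps unfolding dim_am_le_def by blast
    then show ?thesis using that by blast
  qed
  have fin: "\<And>x. finite (msupp (\<phi> x))" using Pd_finite[OF P] .
  have fins: "\<And>x n. finite (msupp (shift n (\<phi> x)))" using Pd_shift_finite[OF P] .
  define U where "U i = {x. \<exists>S a b. finite S \<and> card S = Suc i \<and> good (\<phi> x) S a b \<and> b - a > \<eta> / 2}" for i
  have Uopen: "\<And>i. open (U i)" unfolding U_def by (rule open_goodset[OF rc P])
  have Ucov: "\<And>x. \<exists>i\<le>d. x \<in> U i"
  proof -
    fix x
    have gc: "\<exists>S a b. finite S \<and> 1 \<le> card S \<and> card S \<le> d + 1 \<and> good (\<phi> x) S a b \<and> b - a > \<eta> / 2"
      using good_cover[OF P[of x]] unfolding \<eta>_def .
    then obtain S a b where S: "finite S" "1 \<le> card S" "card S \<le> d + 1" "good (\<phi> x) S a b" "b - a > \<eta> / 2"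
      by blast
    have cs: "card S = Suc (card S - 1)" using S(2) by simp
    have "x \<in> U (card S - 1)" unfolding U_def mem_Collect_eq
      using S(1) cs S(4) S(5) by metis
    moreover have "card S - 1 \<le> d" using S by simp
    ultimately show "\<exists>i\<le>d. x \<in> U i" by blast
  qed
  define F0 where "F0 = {m. \<exists>x. \<phi> x m > \<eta> / 2}"
  have fF0: "finite F0" unfolding F0_def by (rule finite_big[OF cpt rc P]) (simp add: eta)
  define B0 where "B0 = Max (insert 0 (abs ` F0))"
  have B0: "\<And>m. m \<in> F0 \<Longrightarrow> \<bar>m\<bar> \<le> B0" unfolding B0_def using fF0 by simp
  have B0pos: "B0 \<ge> 0" unfolding B0_def using fF0 by simp
  define SI where "SI i x = (SOME S. \<exists>a b. finite S \<and> card S = Suc i \<and> good (\<phi> x) S a b \<and> b - a > \<eta> / 2)" for i x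
  have SI: "\<exists>a b. finite (SI i x) \<and> card (SI i x) = Suc i \<and> good (\<phi> x) (SI i x) a b \<and> b - a > \<eta> / 2"
    if "x \<in> U i" for i x
  proof -
    have "\<exists>S a b. finite S \<and> card S = Suc i \<and> good (\<phi> x) S a b \<and> b - a > \<eta> / 2"
      using that unfolding U_def by blast
    then show ?thesis unfolding SI_def by (rule someI_ex)
  qed
  have SIF0: "SI i x \<subseteq> F0" if xU: "x \<in> U i" for i x
  proof
    fix s assume s: "s \<in> SI i x"
    obtain a b where ab: "finite (SI i x)" "good (\<phi> x) (SI i x) a b" "b - a > \<eta> / 2"
      using SI[OF xU] by blast
    obtain t where "t \<notin> SI i x" using ab(1) ex_new_if_finite infinite_UNIV_int by blast
    then have "\<phi> x t < a" using ab(2) unfolding good_def by blast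
    moreover have "\<phi> x t \<ge> 0" using P[of x] unfolding Pd_def by blast
    moreover have "b < \<phi> x s" using ab(2) s unfolding good_def by blast
    ultimately have "\<phi> x s > \<eta> / 2" using ab(3) by linarith
    then show "s \<in> F0" unfolding F0_def by blast
  qed
  define c where "c i x = Min (SI i x)" for i x
  have cF0: "c i x \<in> SI i x" if xU: "x \<in> U i" for i x
  proof -
    obtain a b where "finite (SI i x)" "card (SI i x) = Suc i" using SI[OF xU] by blast
    then show ?thesis unfolding c_def by (intro Min_in) auto
  qed
  have cB: "\<bar>c i x\<bar> \<le> B0" if "x \<in> U i" for i x
    using B0 SIF0[OF that] cF0[OF that] by blast
  have key: "c i y = c i x + (int m - int n)"
    if xy: "x \<in> U i" "y \<in> U i" and mn: "(T ^^ m) x = (T ^^ n) y" "m \<le> M" "n \<le> M" for i x y m n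
  proof -
    define z where "z = (T ^^ m) x"
    have "int m \<in> E" "- int n \<in> E" using mn unfolding E_def by auto
    then have r1: "rho (\<phi> z) (shift (int m) (\<phi> x)) < \<epsilon>"
      and r2: "rho (\<phi> y) (shift (- int n) (\<phi> z)) < \<epsilon>"
    proof -
      have eqv: "\<And>n' x' y'. n' \<in> E \<Longrightarrow> y' \<in> Tn_set T n' x' \<Longrightarrow> rho (\<phi> y') (shift n' (\<phi> x')) < \<epsilon>"
        using eq unfolding equivariant_def by blast
      show "rho (\<phi> z) (shift (int m) (\<phi> x)) < \<epsilon>"
        by (rule eqv[OF \<open>int m \<in> E\<close> Tn_pos]) (simp add: z_def)
      show "rho (\<phi> y) (shift (- int n) (\<phi> z)) < \<epsilon>"
        by (rule eqv[OF \<open>- int n \<in> E\<close> Tn_neg]) (simp add: z_def mn(1))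
    qed
    obtain a b where ab: "finite (SI i x)" "card (SI i x) = Suc i" "good (\<phi> x) (SI i x) a b" "b - a > \<eta> / 2"
      using SI[OF xy(1)] by blast
    obtain a' b' where ab': "finite (SI i y)" "card (SI i y) = Suc i" "good (\<phi> y) (SI i y) a' b'"
      using SI[OF xy(2)] by blast
    let ?S1 = "(\<lambda>s. s + int m) ` SI i x"
    have g1: "good (shift (int m) (\<phi> x)) ?S1 a b" using good_shift[OF ab(3)] .
    have c1: "\<And>t. \<bar>\<phi> z t - shift (int m) (\<phi> x) t\<bar> < \<epsilon>"
      using coord_le_rho[OF fin fins] r1 by (meson le_less_trans)
    have g2: "good (\<phi> z) ?S1 (a + \<epsilon>) (b - \<epsilon>)"
    proof -
      have "a + \<epsilon> < b - \<epsilon>" using ab(4) eta unfolding \<epsilon>_def by simp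
      then show ?thesis by (rule good_perturb[OF g1 c1])
    qed
    let ?S2 = "(\<lambda>s. s + - int n) ` ?S1"
    have g3: "good (shift (- int n) (\<phi> z)) ?S2 (a + \<epsilon>) (b - \<epsilon>)" using good_shift[OF g2] .
    have c2: "\<And>t. \<bar>\<phi> y t - shift (- int n) (\<phi> z) t\<bar> < \<epsilon>"
      using coord_le_rho[OF fin fins] r2 by (meson le_less_trans)
    have g4: "good (\<phi> y) ?S2 (a + \<epsilon> + \<epsilon>) (b - \<epsilon> - \<epsilon>)"
    proof -
      have "a + \<epsilon> + \<epsilon> < b - \<epsilon> - \<epsilon>" using ab(4) eta unfolding \<epsilon>_def by simp
      then show ?thesis by (rule good_perturb[OF g3 c2])
    qed
    have S2: "?S2 = (\<lambda>s. s + (int m - int n)) ` SI i x" by (simp add: image_image algebra_simps)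
    have cS2: "card ((\<lambda>s. s + (int m - int n)) ` SI i x) = Suc i"
      using ab(2) by (simp add: card_image inj_on_def)
    have "SI i y = (\<lambda>s. s + (int m - int n)) ` SI i x"
      using good_unique[OF ab'(1) _ _ ab'(3) g4[unfolded S2]] ab(1) ab'(2) cS2 by simp
    then have "c i y = Min ((\<lambda>s. s + (int m - int n)) ` SI i x)" unfolding c_def by simp
    also have "\<dots> = Min (SI i x) + (int m - int n)"
      using ab(1,2) by (intro mono_Min_commute[symmetric]) (auto simp: mono_def)
    finally show ?thesis unfolding c_def .
  qed
  define L where "L = B0 + int M"
  define H where "H i = {(x, k, y). x \<in> U i \<and> y \<in> U i \<and> k = c i y - c i x \<and>
      (T ^^ nat (L - c i x)) x = (T ^^ nat (L - c i y)) y}" for i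
  define N where "N = nat (2 * B0 + int M)"
  have HDR: "H i \<subseteq> DR T" for i
  proof
    fix g assume "g \<in> H i"
    then obtain x k y where g: "g = (x,k,y)" "x \<in> U i" "y \<in> U i" "k = c i y - c i x"
      "(T ^^ nat (L - c i x)) x = (T ^^ nat (L - c i y)) y" unfolding H_def by auto
    have "k = int (nat (L - c i x)) - int (nat (L - c i y))"
      using g cB[OF g(2)] cB[OF g(3)] B0pos unfolding L_def by auto
    then show "g \<in> DR T" using g unfolding DR_def by blast
  qed
  have Hpieces: "H i \<subseteq> \<Union> ((\<lambda>(m,n). Zset T UNIV m n UNIV) ` ({..N} \<times> {..N}))" for i
  proof
    fix g assume "g \<in> H i"
    then obtain x k y where g: "g = (x,k,y)" "x \<in> U i" "y \<in> U i" "k = c i y - c i x"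
      "(T ^^ nat (L - c i x)) x = (T ^^ nat (L - c i y)) y" unfolding H_def by auto
    have bx: "\<bar>c i x\<bar> \<le> B0" and by': "\<bar>c i y\<bar> \<le> B0" using cB g by auto
    have "k = int (nat (L - c i x)) - int (nat (L - c i y))"
      using g bx by' B0pos unfolding L_def by auto
    then have "g \<in> Zset T UNIV (nat (L - c i x)) (nat (L - c i y)) UNIV"
      using g unfolding Zset_def by auto
    moreover have "nat (L - c i x) \<le> N" "nat (L - c i y) \<le> N"
      using bx by' unfolding N_def L_def by auto
    ultimately show "g \<in> \<Union> ((\<lambda>(m,n). Zset T UNIV m n UNIV) ` ({..N} \<times> {..N}))" by blast
  qed
  have Hrc: "rel_compact T (H i)" for i
    unfolding rel_compact_def
  proof
    show "H i \<subseteq> DR T" by (rule HDR)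
    let ?C = "\<Union> ((\<lambda>(m,n). Zset T UNIV m n UNIV) ` ({..N} \<times> {..N}))"
    have "closedin (DR_top T) ?C"
      by (intro closedin_Union) (auto intro: closedin_piece[OF lh])
    moreover have "compactin (DR_top T) ?C"
      by (intro compactin_Union) (auto intro: compactin_piece[OF cpt lh])
    moreover have "(DR_top T) closure_of (H i) \<subseteq> ?C"
      using closure_of_minimal[OF Hpieces] calculation(1) by blast
    ultimately show "compactin (DR_top T) ((DR_top T) closure_of (H i))"
      using closed_compactin closedin_closure_of by blast
  qed
  have Hsg: "subgroupoid T (H i)" for i
    unfolding subgroupoid_def
  proof (intro conjI allI impI)
    show "H i \<subseteq> DR T" by (rule HDR)
  next
    fix x k y l z assume "(x, k, y) \<in> H i \<and> (y, l, z) \<in> H i"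
    then show "(x, k + l, z) \<in> H i" unfolding H_def by auto
  next
    fix x k y assume "(x, k, y) \<in> H i"
    then show "(y, - k, x) \<in> H i" unfolding H_def by auto
  qed
  have Hcont: "{g \<in> K. src g \<in> U i \<and> rng g \<in> U i} \<subseteq> H i" for i
  proof
    fix g assume g: "g \<in> {g \<in> K. src g \<in> U i \<and> rng g \<in> U i}"
    then obtain m n where mn: "m \<le> M" "n \<le> M" "g \<in> Zset T UNIV m n UNIV" using KM by blast
    then obtain x k y where gg: "g = (x,k,y)" "(T ^^ m) x = (T ^^ n) y" "k = int m - int n"
      unfolding Zset_def by auto
    have xy: "x \<in> U i" "y \<in> U i" using g gg unfolding src_def rng_def by auto
    have kc: "c i y = c i x + k" using key[OF xy gg(2) mn(1,2)] gg(3) by simp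
    have bx: "\<bar>c i x\<bar> \<le> B0" using cB[OF xy(1)] .
    define p where "p = nat (L - c i x - int m)"
    have e1: "nat (L - c i x) = p + m" using bx mn(1) unfolding p_def L_def by auto
    have e2: "nat (L - c i y) = p + n" using bx mn(1) kc gg(3) unfolding p_def L_def by auto
    have "(T ^^ nat (L - c i x)) x = (T ^^ nat (L - c i y)) y"
      unfolding e1 e2 funpow_add using gg(2) by simp
    then show "g \<in> H i" using gg xy kc unfolding H_def by auto
  qed
  show "\<exists>U :: nat \<Rightarrow> 'a set. (\<forall>i\<le>d. open (U i)) \<and> src ` K \<union> rng ` K \<subseteq> (\<Union>i\<le>d. U i) \<and>
        (\<forall>i\<le>d. \<exists>H. subgroupoid T H \<and> rel_compact T H \<and>
            {g \<in> K. src g \<in> U i \<and> rng g \<in> U i} \<subseteq> H)"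
  proof (intro exI[of _ U] conjI allI impI)
    show "\<And>i. i \<le> d \<Longrightarrow> open (U i)" using Uopen by blast
    show "src ` K \<union> rng ` K \<subseteq> (\<Union>i\<le>d. U i)" using Ucov by blast
    show "\<And>i. i \<le> d \<Longrightarrow> \<exists>H. subgroupoid T H \<and> rel_compact T H \<and>
            {g \<in> K. src g \<in> U i \<and> rng g \<in> U i} \<subseteq> H"
      using Hsg Hrc Hcont by blast
  qed
qed


end
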